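(* Let $1\le p\ne q<\infty$. No operators $T\in B(\ell^p)$ and $S\in B(\ell^q)$ are equivalent after one-sided extension.
   Context: $\ell^p=\ell^p(\mathbb N)$ over $\mathbb C$; $B(X,Y)$ denotes bounded linear operators; invertibility means bounded inverse; $X\oplus Y$ is the $\ell^2$-direct sum and $\mathrm{id}_X$ the identity. Operators $T\in B(X)$ and $S\in B(Y)$ are equivalent after extension if there exist Banach spaces $X'$, $Y'$ and invertible $E\in B(Y\oplus Y',X\oplus X')$, $F\in B(X\oplus X',Y\oplus Y')$ with $\begin{bmatrix}T&0\\0&\mathrm{id}_{X'}\end{bmatrix}=E\begin{bmatrix}S&0\\0&\mathrm{id}_{Y'}\end{bmatrix}F$. They are equivalent after one-sided extension if this holds with one of $X'$ or $Y'$ equal to the trivial space $\{0\}$. *)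

theory Defs
  imports "HOL-Analysis.Analysis"
begin

record 'a nspace =
  carrier :: "'a set"
  vadd :: "'a \<Rightarrow> 'a \<Rightarrow> 'a"
  vscl :: "complex \<Rightarrow> 'a \<Rightarrow> 'a"
  vnorm :: "'a \<Rightarrow> real"

definition lp_space :: "real \<Rightarrow> (nat \<Rightarrow> complex) nspace" where
  "lp_space p = \<lparr> carrier = {x. summable (\<lambda>n. cmod (x n) powr p)},
                 vadd = (\<lambda>x y n. x n + y n),
                 vscl = (\<lambda>c x n. c * x n),
                 vnorm = (\<lambda>x. (\<Sum>n. cmod (x n) powr p) powr (1 / p)) \<rparr>"

definition complex_banach :: "(complex \<Rightarrow> 'a::ab_group_add \<Rightarrow> 'a) \<Rightarrow> ('a \<Rightarrow> real) \<Rightarrow> bool" where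
  "complex_banach sc nm \<longleftrightarrow>
     vector_space sc \<and>
     (\<forall>x. nm x = 0 \<longleftrightarrow> x = 0) \<and>
     (\<forall>x y. nm (x + y) \<le> nm x + nm y) \<and>
     (\<forall>c x. nm (sc c x) = cmod c * nm x) \<and>
     (\<forall>X :: nat \<Rightarrow> 'a.
        (\<forall>e>0. \<exists>N. \<forall>m\<ge>N. \<forall>n\<ge>N. nm (X m - X n) < e) \<longrightarrow>
        (\<exists>l. \<forall>e>0. \<exists>N. \<forall>n\<ge>N. nm (X n - l) < e))"

definition type_space :: "(complex \<Rightarrow> 'a::ab_group_add \<Rightarrow> 'a) \<Rightarrow> ('a \<Rightarrow> real) \<Rightarrow> 'a nspace" where
  "type_space sc nm = \<lparr> carrier = UNIV, vadd = (+), vscl = sc, vnorm = nm \<rparr>"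

definition dsum :: "'a nspace \<Rightarrow> 'b nspace \<Rightarrow> ('a \<times> 'b) nspace" where
  "dsum A B = \<lparr> carrier = carrier A \<times> carrier B,
               vadd = (\<lambda>(a, b) (c, d). (vadd A a c, vadd B b d)),
               vscl = (\<lambda>z (a, b). (vscl A z a, vscl B z b)),
               vnorm = (\<lambda>(a, b). sqrt ((vnorm A a)\<^sup>2 + (vnorm B b)\<^sup>2)) \<rparr>"

text \<open>Bounded linear operators from A to B (only the values on the carrier matter).\<close>
definition bop :: "'a nspace \<Rightarrow> 'b nspace \<Rightarrow> ('a \<Rightarrow> 'b) \<Rightarrow> bool" where
  "bop A B f \<longleftrightarrow>
     (\<forall>x\<in>carrier A. f x \<in> carrier B) \<and>
     (\<forall>x\<in>carrier A. \<forall>y\<in>carrier A. f (vadd A x y) = vadd B (f x) (f y)) \<and>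
     (\<forall>c. \<forall>x\<in>carrier A. f (vscl A c x) = vscl B c (f x)) \<and>
     (\<exists>C. \<forall>x\<in>carrier A. vnorm B (f x) \<le> C * vnorm A x)"

definition inv_bop :: "'a nspace \<Rightarrow> 'b nspace \<Rightarrow> ('a \<Rightarrow> 'b) \<Rightarrow> bool" where
  "inv_bop A B f \<longleftrightarrow> bop A B f \<and>
     (\<exists>g. bop B A g \<and> (\<forall>x\<in>carrier A. g (f x) = x) \<and> (\<forall>y\<in>carrier B. f (g y) = y))"

end

theory Submission
  imports Defs
begin


definition Qn :: "real \<Rightarrow> (nat \<Rightarrow> complex) \<Rightarrow> real" where
  "Qn p x = (\<Sum>n. cmod (x n) powr p)"
definition lpS :: "real \<Rightarrow> (nat \<Rightarrow> complex) set" where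
  "lpS p = {x. summable (\<lambda>n. cmod (x n) powr p)}"

lemma pow_tri:
  assumes "0 \<le> p"
  shows "cmod (a + b) powr p \<le> 2 powr p * (cmod a powr p + cmod b powr p)"
proof -
  have "cmod (a + b) \<le> 2 * max (cmod a) (cmod b)"
    using norm_triangle_ineq[of a b] by linarith
  then have "cmod (a + b) powr p \<le> (2 * max (cmod a) (cmod b)) powr p"
    by (simp add: assms powr_mono2)
  also have "\<dots> = 2 powr p * max (cmod a) (cmod b) powr p"
    by (simp add: powr_mult)
  also have "max (cmod a) (cmod b) powr p \<le> cmod a powr p + cmod b powr p"
    by (simp add: max_def)
  finally show ?thesis by (simp add: mult_left_mono)
qed

lemma Qn_nonneg: "x \<in> lpS p \<Longrightarrow> 0 \<le> Qn p x"
  unfolding Qn_def lpS_def by (rule suminf_nonneg) auto  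

lemma lpS_add:
  assumes "0 \<le> p" "x \<in> lpS p" "y \<in> lpS p"
  shows "(\<lambda>k. x k + y k) \<in> lpS p"
    and "Qn p (\<lambda>k. x k + y k) \<le> 2 powr p * (Qn p x + Qn p y)"
proof -
  have s: "summable (\<lambda>n. 2 powr p * (cmod (x n) powr p + cmod (y n) powr p))"
    using assms by (auto simp: lpS_def intro: summable_mult summable_add)
  have le: "\<And>n. cmod (x n + y n) powr p \<le> 2 powr p * (cmod (x n) powr p + cmod (y n) powr p)"
    using pow_tri assms(1) by blast
  show s2: "(\<lambda>k. x k + y k) \<in> lpS p"
    unfolding lpS_def mem_Collect_eq by (rule summable_comparison_test[OF _ s]) (use le in auto)
  have "Qn p (\<lambda>k. x k + y k) \<le> (\<Sum>n. 2 powr p * (cmod (x n) powr p + cmod (y n) powr p))"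
    unfolding Qn_def using s2 s le by (intro suminf_le) (auto simp: lpS_def)
  also have "\<dots> = 2 powr p * (Qn p x + Qn p y)"
    using assms by (simp add: Qn_def lpS_def suminf_mult summable_add suminf_add[symmetric])
  finally show "Qn p (\<lambda>k. x k + y k) \<le> 2 powr p * (Qn p x + Qn p y)" .
qed

lemma lpS_neg: "x \<in> lpS p \<Longrightarrow> (\<lambda>k. - x k) \<in> lpS p" and Qn_neg: "Qn p (\<lambda>k. - x k) = Qn p x"
  by (auto simp: lpS_def Qn_def)

lemma lpS_disj:
  assumes "x \<in> lpS p" "y \<in> lpS p" "\<And>k. x k = 0 \<or> y k = 0"
  shows "Qn p (\<lambda>k. x k + y k) = Qn p x + Qn p y"
proof -
  have "\<And>n. cmod (x n + y n) powr p = cmod (x n) powr p + cmod (y n) powr p"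
    using assms(3) by (metis add.left_neutral add.right_neutral norm_zero powr_0)
  then show ?thesis using assms unfolding Qn_def lpS_def by (simp add: suminf_add)
qed

lemma lpS_sum:
  assumes "0 \<le> p" "\<And>i. i < (N::nat) \<Longrightarrow> y i \<in> lpS p"
  shows "(\<lambda>k. \<Sum>i<N. y i k) \<in> lpS p"
  using assms(2)
proof (induction N)
  case 0 then show ?case by (simp add: lpS_def)
next
  case (Suc N)
  then show ?case using lpS_add(1)[OF assms(1), of "\<lambda>k. \<Sum>i<N. y i k" "y N"] by simp
qed

lemma Qn_sum:
  assumes "0 \<le> p" "\<And>i. i < (N::nat) \<Longrightarrow> y i \<in> lpS p"
  shows "Qn p (\<lambda>k. \<Sum>i<N. y i k) \<le> (\<Sum>i<N. 2 powr (p * real (Suc i)) * Qn p (y i))"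
  using assms(2)
proof (induction N arbitrary: y)
  case 0 then show ?case by (simp add: Qn_def)
next
  case (Suc N)
  have ys: "\<And>i. i < N \<Longrightarrow> y (Suc i) \<in> lpS p" using Suc.prems by simp
  have eq: "(\<lambda>k. \<Sum>i<Suc N. y i k) = (\<lambda>k. y 0 k + (\<Sum>i<N. y (Suc i) k))"
    by (rule ext, rule sum.lessThan_Suc_shift)
  have "Qn p (\<lambda>k. \<Sum>i<Suc N. y i k) \<le> 2 powr p * (Qn p (y 0) + Qn p (\<lambda>k. \<Sum>i<N. y (Suc i) k))"
    unfolding eq using lpS_add(2)[OF assms(1) Suc.prems[of 0] lpS_sum[OF assms(1) ys]] by simp
  also have "\<dots> \<le> 2 powr p * (Qn p (y 0) + (\<Sum>i<N. 2 powr (p * real (Suc i)) * Qn p (y (Suc i))))"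
    using Suc.IH[OF ys] by (intro mult_left_mono add_left_mono) auto
  also have "\<dots> = (\<Sum>i<Suc N. 2 powr (p * real (Suc i)) * Qn p (y i))"
  proof -
    have pt: "\<And>i. 2 powr p * (2 powr (p * real (Suc i)) * Qn p (y (Suc i))) = 2 powr (p * real (Suc (Suc i))) * Qn p (y (Suc i))"
      by (simp add: powr_add[symmetric] algebra_simps)
    have "(\<Sum>i<Suc N. 2 powr (p * real (Suc i)) * Qn p (y i)) = 2 powr (p * real (Suc 0)) * Qn p (y 0) + (\<Sum>i<N. 2 powr (p * real (Suc (Suc i))) * Qn p (y (Suc i)))"
      by (rule sum.lessThan_Suc_shift)
    also have "\<dots> = 2 powr p * Qn p (y 0) + (\<Sum>i<N. 2 powr p * (2 powr (p * real (Suc i)) * Qn p (y (Suc i))))"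
      by (simp only: pt) simp
    finally show ?thesis by (simp add: distrib_left sum_distrib_left)
  qed
  finally show ?case .
qed

lemma Qn_sum_disj:
  assumes "\<And>i. i < (N::nat) \<Longrightarrow> y i \<in> lpS p" "0 \<le> p"
    and "\<And>i j k. i < N \<Longrightarrow> j < N \<Longrightarrow> i \<noteq> j \<Longrightarrow> y i k = 0 \<or> y j k = 0"
  shows "Qn p (\<lambda>k. \<Sum>i<N. y i k) = (\<Sum>i<N. Qn p (y i))"
  using assms(1,3)
proof (induction N)
  case 0 then show ?case by (simp add: Qn_def)
next
  case (Suc N)
  have d: "(\<Sum>i<N. y i k) = 0 \<or> y N k = 0" for k
  proof (cases "y N k = 0")
    case False
    then have "\<forall>i<N. y i k = 0" using Suc.prems(2)[of _ N k] by auto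
    then show ?thesis by simp
  qed simp
  have "Qn p (\<lambda>k. \<Sum>i<Suc N. y i k) = Qn p (\<lambda>k. (\<Sum>i<N. y i k) + y N k)" by simp
  also have "\<dots> = Qn p (\<lambda>k. \<Sum>i<N. y i k) + Qn p (y N)"
  proof -
    have s1: "(\<lambda>k. \<Sum>i<N. y i k) \<in> lpS p" using lpS_sum[OF assms(2)] Suc.prems(1) by auto
    show ?thesis using lpS_disj[OF s1 Suc.prems(1)[of N] d] by simp
  qed
  finally show ?case using Suc by simp
qed

lemma block:
  fixes x :: "nat \<Rightarrow> complex"
  assumes x: "x \<in> lpS p" and KK: "K \<le> K'"
    and h1: "sum (\<lambda>k. cmod (x k) powr p) {..<K} \<le> \<delta>"
    and h2: "Qn p x - sum (\<lambda>k. cmod (x k) powr p) {..<K'} \<le> \<delta>"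
  shows "(\<lambda>k. if K \<le> k \<and> k < K' then x k else 0) \<in> lpS p"
    and "(\<lambda>k. if K \<le> k \<and> k < K' then 0 else x k) \<in> lpS p"
    and "Qn p (\<lambda>k. if K \<le> k \<and> k < K' then 0 else x k) \<le> 2 * \<delta>"
    and "Qn p x - 2 * \<delta> \<le> Qn p (\<lambda>k. if K \<le> k \<and> k < K' then x k else 0)"
    and "Qn p (\<lambda>k. if K \<le> k \<and> k < K' then x k else 0) \<le> Qn p x"
proof -
  define f where "f k = cmod (x k) powr p" for k
  define w where "w k = (if K \<le> k \<and> k < K' then x k else 0)" for k
  define e where "e k = (if K \<le> k \<and> k < K' then 0 else x k)" for k
  have fs: "summable f" using x by (simp add: lpS_def f_def[abs_def])
  have wf: "\<And>k. cmod (w k) powr p = (if K \<le> k \<and> k < K' then f k else 0)"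
    by (simp add: w_def f_def)
  have ef: "\<And>k. cmod (e k) powr p = (if K \<le> k \<and> k < K' then 0 else f k)"
    by (simp add: e_def f_def)
  have Qw: "Qn p w = sum f {K..<K'}"
    unfolding Qn_def wf by (subst suminf_finite[of "{K..<K'}"]) auto
  show ws: "(\<lambda>k. if K \<le> k \<and> k < K' then x k else 0) \<in> lpS p"
    unfolding lpS_def mem_Collect_eq
    by (rule summable_comparison_test[OF _ fs]) (auto simp: f_def)
  show es: "(\<lambda>k. if K \<le> k \<and> k < K' then 0 else x k) \<in> lpS p"
    unfolding lpS_def mem_Collect_eq
    by (rule summable_comparison_test[OF _ fs]) (auto simp: f_def)
  have we: "w \<in> lpS p" using ws by (simp add: w_def[abs_def])
  have ee: "e \<in> lpS p" using es by (simp add: e_def[abs_def])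
  have dj: "\<And>k. w k = 0 \<or> e k = 0" by (simp add: w_def e_def)
  have "(\<lambda>k. w k + e k) = x" by (auto simp: w_def e_def)
  then have Qx: "Qn p x = Qn p w + Qn p e"
    using lpS_disj[OF we ee dj] by simp
  have split: "sum f {..<K'} = sum f {..<K} + sum f {K..<K'}"
    using sum.atLeastLessThan_concat[of 0 K K' f] KK by (simp add: atLeast0LessThan)
  have "Qn p e \<le> 2 * \<delta>" using Qx Qw split h1 h2 by (simp add: f_def)
  then show "Qn p (\<lambda>k. if K \<le> k \<and> k < K' then 0 else x k) \<le> 2 * \<delta>" by (simp add: e_def[abs_def])
  have "Qn p x - 2 * \<delta> \<le> Qn p w" using Qx Qw split h1 h2 by (simp add: f_def)
  then show "Qn p x - 2 * \<delta> \<le> Qn p (\<lambda>k. if K \<le> k \<and> k < K' then x k else 0)" by (simp add: w_def[abs_def])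
  have "0 \<le> Qn p e" using Qn_nonneg ee by simp
  then show "Qn p (\<lambda>k. if K \<le> k \<and> k < K' then x k else 0) \<le> Qn p x" using Qx by (simp add: w_def[abs_def])
qed

lemma step_exists:
  fixes v :: "nat \<Rightarrow> nat \<Rightarrow> complex"
  assumes p: "0 < p" and vin: "\<And>j. v j \<in> lpS p" and null: "\<And>k. (\<lambda>j. v j k) \<longlonglongrightarrow> 0"
    and d: "0 < \<delta>"
  shows "\<exists>m K'. m0 \<le> m \<and> K < K' \<and> sum (\<lambda>k. cmod (v m k) powr p) {..<K} \<le> \<delta>
              \<and> Qn p (v m) - sum (\<lambda>k. cmod (v m k) powr p) {..<K'} \<le> \<delta>"
proof -
  have "(\<lambda>j. sum (\<lambda>k. cmod (v j k) powr p) {..<K}) \<longlonglongrightarrow> (\<Sum>k<K. 0)"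
  proof (rule tendsto_sum)
    fix k
    have "(\<lambda>j. cmod (v j k)) \<longlonglongrightarrow> 0" using null[of k] tendsto_norm_zero by blast
    then show "(\<lambda>j. cmod (v j k) powr p) \<longlonglongrightarrow> 0"
      by (rule tendsto_zero_powrI) (use p in auto)
  qed
  then have "\<forall>\<^sub>F j in sequentially. sum (\<lambda>k. cmod (v j k) powr p) {..<K} < \<delta>"
    using d by (simp add: order_tendstoD(2))
  then obtain N where N: "\<And>j. j \<ge> N \<Longrightarrow> sum (\<lambda>k. cmod (v j k) powr p) {..<K} < \<delta>"
    unfolding eventually_sequentially by blast
  define m where "m = max N m0"
  have "(\<lambda>n. \<Sum>k<n. cmod (v m k) powr p) \<longlonglongrightarrow> Qn p (v m)"
    unfolding Qn_def by (rule summable_LIMSEQ) (use vin in \<open>simp add: lpS_def\<close>)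
  then have "\<forall>\<^sub>F n in sequentially. Qn p (v m) - \<delta> < (\<Sum>k<n. cmod (v m k) powr p)"
    using d by (intro order_tendstoD(1)) auto
  then obtain N2 where N2: "\<And>n. n \<ge> N2 \<Longrightarrow> Qn p (v m) - \<delta> < (\<Sum>k<n. cmod (v m k) powr p)"
    unfolding eventually_sequentially by blast
  show ?thesis
    apply (rule exI[of _ m], rule exI[of _ "max N2 (Suc K)"])
    using N[of m] N2[of "max N2 (Suc K)"] by (auto simp: m_def)
qed

lemma hump:
  fixes v :: "nat \<Rightarrow> nat \<Rightarrow> complex"
  assumes p: "1 \<le> p" and vin: "\<And>j. v j \<in> lpS p" and null: "\<And>k. (\<lambda>j. v j k) \<longlonglongrightarrow> 0"
    and lo: "\<And>j. c \<le> Qn p (v j)" and hi: "\<And>j. Qn p (v j) \<le> B" and c: "0 < c"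
  shows "\<exists>m. strict_mono m \<and> (\<forall>N. real N * c / (4 * 2 powr p) \<le> Qn p (\<lambda>k. \<Sum>i<N. v (m i) k)
            \<and> Qn p (\<lambda>k. \<Sum>i<N. v (m i) k) \<le> 2 powr p * (real N * (B + c)))"
proof -
  define t where "t = 2 powr p"
  have t: "1 \<le> t" using p unfolding t_def by (intro ge_one_powr_ge_zero) auto
  define \<eta> where "\<eta> = c / (4 * t)"
  have \<eta>: "0 < \<eta>" "\<eta> \<le> c" using c t by (auto simp: \<eta>_def field_simps)
  define \<delta> where "\<delta> i = min (c/4) (\<eta> / (2 * 2 powr (p * real (Suc i))))" for i
  have \<delta>: "0 < \<delta> i" for i using c \<eta> by (simp add: \<delta>_def)
  define P where "P i K m0 r \<longleftrightarrow> m0 \<le> fst r \<and> K < snd r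
      \<and> sum (\<lambda>k. cmod (v (fst r) k) powr p) {..<K} \<le> \<delta> i
      \<and> Qn p (v (fst r)) - sum (\<lambda>k. cmod (v (fst r) k) powr p) {..<snd r} \<le> \<delta> i"
    for i K m0 r
  have "\<forall>i K m0. \<exists>r. P i K m0 r"
  proof (intro allI)
    fix i K m0
    obtain m K' where "m0 \<le> m \<and> K < K' \<and> sum (\<lambda>k. cmod (v m k) powr p) {..<K} \<le> \<delta> i
              \<and> Qn p (v m) - sum (\<lambda>k. cmod (v m k) powr p) {..<K'} \<le> \<delta> i"
      using step_exists[of p v "\<delta> i" m0 K] p vin null \<delta> by auto
    then show "\<exists>r. P i K m0 r" by (intro exI[of _ "(m, K')"]) (simp add: P_def)
  qed
  then obtain g where g: "\<And>i K m0. P i K m0 (g i K m0)" by metis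
  define S where "S = rec_nat (g 0 0 0) (\<lambda>i s. g (Suc i) (snd s) (Suc (fst s)))"
  have S0: "S 0 = g 0 0 0" and SS: "\<And>i. S (Suc i) = g (Suc i) (snd (S i)) (Suc (fst (S i)))"
    by (simp_all add: S_def)
  define m where "m i = fst (S i)" for i
  define Kh where "Kh i = snd (S i)" for i
  define Kl where "Kl i = (case i of 0 \<Rightarrow> 0 | Suc j \<Rightarrow> Kh j)" for i
  have PS: "P i (Kl i) (case i of 0 \<Rightarrow> 0 | Suc j \<Rightarrow> Suc (m j)) (S i)" for i
    by (cases i) (simp_all add: S0 SS g Kl_def Kh_def m_def)
  have sm: "strict_mono m"
  proof (unfold strict_mono_Suc_iff, intro allI)
    fix n show "m n < m (Suc n)" using PS[of "Suc n"] by (simp add: P_def m_def Suc_le_eq)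
  qed
  have KlKh: "Kl i < Kh i" for i using PS[of i] by (simp add: P_def Kh_def)
  have KlS: "Kl (Suc i) = Kh i" for i by (simp add: Kl_def)
  have smK: "strict_mono Kh"
  proof (unfold strict_mono_Suc_iff, intro allI)
    fix n show "Kh n < Kh (Suc n)" using KlKh[of "Suc n"] KlS[of n] by simp
  qed
  have KhKl: "Kh i \<le> Kl j" if "i < j" for i j
  proof -
    have j': "j = Suc (j - 1)" "i \<le> j - 1" using that by arith+
    then show ?thesis using smK by (metis KlS strict_mono_less_eq)
  qed
  have h1: "sum (\<lambda>k. cmod (v (m i) k) powr p) {..<Kl i} \<le> \<delta> i"
   and h2: "Qn p (v (m i)) - sum (\<lambda>k. cmod (v (m i) k) powr p) {..<Kh i} \<le> \<delta> i" for i
    using PS[of i] by (simp_all add: P_def m_def Kh_def)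
  define w where "w i k = (if Kl i \<le> k \<and> k < Kh i then v (m i) k else 0)" for i k
  define e where "e i k = (if Kl i \<le> k \<and> k < Kh i then 0 else v (m i) k)" for i k
  have ws: "w i \<in> lpS p" and es: "e i \<in> lpS p" and Qe: "Qn p (e i) \<le> 2 * \<delta> i"
    and Qw1: "Qn p (v (m i)) - 2 * \<delta> i \<le> Qn p (w i)" and Qw2: "Qn p (w i) \<le> Qn p (v (m i))" for i
    using block[OF vin[of "m i"] less_imp_le[OF KlKh[of i]] h1[of i] h2[of i]]
    by (simp_all add: w_def[abs_def] e_def[abs_def])
  have Qwlo: "c / 2 \<le> Qn p (w i)" for i
    using Qw1[of i] lo[of "m i"] \<delta>_def[of i] by linarith
  have Qwhi: "Qn p (w i) \<le> B" for i using Qw2[of i] hi[of "m i"] by linarith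
  have dj: "w i k = 0 \<or> w j k = 0" if "i \<noteq> j" for i j k
  proof (cases "i < j")
    case True then show ?thesis using KhKl[OF True] by (auto simp: w_def)
  next
    case False then have "j < i" using that by simp
    then show ?thesis using KhKl[of j i] by (auto simp: w_def)
  qed
  have "real N * c / (4 * 2 powr p) \<le> Qn p (\<lambda>k. \<Sum>i<N. v (m i) k)
            \<and> Qn p (\<lambda>k. \<Sum>i<N. v (m i) k) \<le> 2 powr p * (real N * (B + c))" for N
  proof -
    define SW where "SW k = (\<Sum>i<N. w i k)" for k
    define SE where "SE k = (\<Sum>i<N. e i k)" for k
    define SV where "SV k = (\<Sum>i<N. v (m i) k)" for k
    have p0: "0 \<le> p" using p by simp
    have SWs: "SW \<in> lpS p" using lpS_sum[OF p0 ws] by (simp add: SW_def[abs_def])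
    have SEs: "SE \<in> lpS p" using lpS_sum[OF p0 es] by (simp add: SE_def[abs_def])
    have QSW: "Qn p SW = (\<Sum>i<N. Qn p (w i))"
      using Qn_sum_disj[of N w p] ws p0 dj by (simp add: SW_def[abs_def])
    have QSW1: "real N * (c/2) \<le> Qn p SW"
      using QSW sum_mono[of "{..<N}" "\<lambda>_. c/2" "\<lambda>i. Qn p (w i)"] Qwlo by simp
    have QSW2: "Qn p SW \<le> real N * B"
      using QSW sum_mono[of "{..<N}" "\<lambda>i. Qn p (w i)" "\<lambda>_. B"] Qwhi by simp
    have "Qn p SE \<le> (\<Sum>i<N. 2 powr (p * real (Suc i)) * Qn p (e i))"
      using Qn_sum[OF p0 es] by (simp add: SE_def[abs_def])
    also have "\<dots> \<le> (\<Sum>i<N. \<eta>)"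
    proof (rule sum_mono)
      fix i
      have "2 powr (p * real (Suc i)) * Qn p (e i) \<le> 2 powr (p * real (Suc i)) * (2 * \<delta> i)"
        using Qe[of i] by (intro mult_left_mono) auto
      also have "\<dots> \<le> 2 powr (p * real (Suc i)) * (2 * (\<eta> / (2 * 2 powr (p * real (Suc i)))))"
        by (intro mult_left_mono) (auto simp: \<delta>_def)
      also have "\<dots> = \<eta>" by simp
      finally show "2 powr (p * real (Suc i)) * Qn p (e i) \<le> \<eta>" .
    qed
    finally have QSE: "Qn p SE \<le> real N * \<eta>" by simp
    have SVeq: "SV = (\<lambda>k. SW k + SE k)"
    proof
      fix k
      have "SV k = (\<Sum>i<N. w i k + e i k)" unfolding SV_def by (rule sum.cong) (auto simp: w_def e_def)
      then show "SV k = SW k + SE k" by (simp add: SW_def SE_def sum.distrib)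
    qed
    have SWeq: "SW = (\<lambda>k. SV k + - SE k)" using SVeq by auto
    have SVs: "SV \<in> lpS p" using SVeq lpS_add(1)[OF p0 SWs SEs] by simp
    have U1: "Qn p SV \<le> t * (Qn p SW + Qn p SE)"
      using SVeq lpS_add(2)[OF p0 SWs SEs] by (simp add: t_def)
    have U2: "Qn p SW \<le> t * (Qn p SV + Qn p SE)"
      using SWeq lpS_add(2)[OF p0 SVs lpS_neg[OF SEs]] by (simp add: t_def Qn_neg)
    have up: "Qn p SV \<le> t * (real N * (B + c))"
    proof -
      have "Qn p SW + Qn p SE \<le> real N * (B + c)"
      proof -
        have "real N * \<eta> \<le> real N * c" using \<eta> by (intro mult_left_mono) auto
        then show ?thesis using QSW2 QSE by (simp add: distrib_left)
      qed
      then have "t * (Qn p SW + Qn p SE) \<le> t * (real N * (B + c))" using t by (intro mult_left_mono) auto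
    then show ?thesis using U1 by linarith
    qed
    have lw: "real N * c / (4 * t) \<le> Qn p SV"
    proof -
      have "t * Qn p SE \<le> t * (real N * \<eta>)" using QSE t by (intro mult_left_mono) auto
      then have "real N * (c/2) \<le> t * Qn p SV + t * (real N * \<eta>)"
        using QSW1 U2 by (simp add: distrib_left)
      also have "t * (real N * \<eta>) = real N * c / 4" using t by (simp add: \<eta>_def)
      finally have "real N * c / 4 \<le> t * Qn p SV" by argo
      then show ?thesis using t by (simp add: field_simps)
    qed
    show ?thesis using up lw by (simp add: SV_def[abs_def] t_def)
  qed
  then show ?thesis using sm by blast
qed
lemma growth:
  assumes "b < a" "0 \<le> b"
  shows "\<exists>N::nat. 1 \<le> N \<and> K * real N powr b < real N powr a"
proof -
  define r where "r = a - b"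
  have r: "0 < r" using assms by (simp add: r_def)
  define y where "y = (\<bar>K\<bar> + 1) powr (1 / r)"
  have y0: "0 \<le> y" by (simp add: y_def)
  define N where "N = nat \<lceil>y\<rceil> + 1"
  have N1: "1 \<le> N" by (simp add: N_def)
  have yN: "y < real N" unfolding N_def by linarith
  have "y powr r < real N powr r" using powr_less_mono2[OF r y0 yN] .
  moreover have "y powr r = \<bar>K\<bar> + 1" using r by (simp add: y_def powr_powr)
  ultimately have 1: "\<bar>K\<bar> + 1 < real N powr r" by simp
  have Nb: "1 \<le> real N powr b" using N1 assms(2) by (intro ge_one_powr_ge_zero) auto
  have "K * real N powr b \<le> \<bar>K\<bar> * real N powr b" using Nb by (intro mult_right_mono) auto
  also have "\<dots> < (\<bar>K\<bar> + 1) * real N powr b" using Nb N1 by (simp add: distrib_right)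
  also have "\<dots> \<le> real N powr r * real N powr b" using 1 Nb by (intro mult_right_mono) auto
  also have "\<dots> = real N powr a" by (simp add: r_def powr_add[symmetric])
  finally show ?thesis using N1 by blast
qed

lemma coord_subseq:
  fixes u :: "nat \<Rightarrow> nat \<Rightarrow> complex"
  assumes "\<And>n k. cmod (u n k) \<le> R"
  shows "\<exists>\<sigma>. strict_mono \<sigma> \<and> (\<forall>k. convergent (\<lambda>n. u (\<sigma> n) k))"
proof -
  have "compact (PiE UNIV (\<lambda>k::nat. cball (0::complex) R))"
    using compactin_PiE[of "\<lambda>_. euclidean" UNIV "\<lambda>k. cball (0::complex) R"]
    by (metis compact_cball compactin_euclidean_iff euclidean_product_topology)
  then have "seq_compact (PiE UNIV (\<lambda>k::nat. cball (0::complex) R))"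
    by (rule compact_imp_seq_compact)
  moreover have "\<And>n. u n \<in> PiE UNIV (\<lambda>k::nat. cball (0::complex) R)"
    using assms by (auto simp: PiE_def)
  ultimately obtain l \<sigma> where "strict_mono \<sigma>" and L: "(u \<circ> \<sigma>) \<longlonglongrightarrow> l"
    by (meson seq_compactE)
  have "(\<lambda>n. u (\<sigma> n) k) \<longlonglongrightarrow> l k" for k
  proof -
    have "continuous_on UNIV (\<lambda>x::nat\<Rightarrow>complex. x k)" by simp
    then have "isCont (\<lambda>x::nat\<Rightarrow>complex. x k) l" using continuous_on_eq_continuous_at open_UNIV by blast
    from isCont_tendsto_compose[OF this L] show ?thesis by (simp add: o_def)
  qed
  then show ?thesis using \<open>strict_mono \<sigma>\<close> by (auto simp: convergent_def)
qed

lemma core: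
  fixes J :: "(nat \<Rightarrow> complex) \<Rightarrow> (nat \<Rightarrow> complex)" and p q M C :: real
  assumes p: "1 \<le> p" and q: "1 \<le> q" and pq: "p \<noteq> q"
    and Jin: "\<And>x. x \<in> lpS q \<Longrightarrow> J x \<in> lpS p"
    and Jadd: "\<And>x y. x \<in> lpS q \<Longrightarrow> y \<in> lpS q \<Longrightarrow> J (\<lambda>k. x k + y k) = (\<lambda>k. J x k + J y k)"
    and Jneg: "\<And>x. x \<in> lpS q \<Longrightarrow> J (\<lambda>k. - x k) = (\<lambda>k. - J x k)"
    and up: "\<And>x. x \<in> lpS q \<Longrightarrow> Qn p (J x) powr (1/p) \<le> M * Qn q x powr (1/q)"
    and lo: "\<And>x. x \<in> lpS q \<Longrightarrow> Qn q x powr (1/q) \<le> C * Qn p (J x) powr (1/p)"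
  shows False
proof -
  have p0: "0 < p" "0 \<le> p" and q0: "0 < q" "0 \<le> q" using p q by auto
  define ee where "ee n = (\<lambda>k::nat. if k = n then (1::complex) else 0)" for n :: nat
  have fin: "summable f \<and> suminf f = sum f A" if "finite A" "\<And>k. k \<notin> A \<Longrightarrow> f k = 0" for f :: "nat \<Rightarrow> real" and A
    using summable_finite[of A f] suminf_finite[of A f] that by blast
  have ee_in: "ee n \<in> lpS q" and Qee: "Qn q (ee n) = 1" for n
    using fin[where A="{n}" and f="\<lambda>k. cmod (ee n k) powr q"] by (auto simp: ee_def lpS_def Qn_def)
  define dd where "dd a b = (\<lambda>k. ee a k + - ee b k)" for a b
  have dd_in: "dd a b \<in> lpS q" for a b
    using lpS_add(1)[OF q0(2) ee_in lpS_neg[OF ee_in]] by (simp add: dd_def)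
  have Qdd: "Qn q (dd a b) = 2" if "a \<noteq> b" for a b
    using fin[where A="{a,b}" and f="\<lambda>k. cmod (dd a b k) powr q"] that
    by (auto simp: dd_def ee_def Qn_def)
  have z: "(\<lambda>k. 0::complex) \<in> lpS q" by (simp add: lpS_def)
  have J0: "J (\<lambda>k. 0) = (\<lambda>k. 0)"
  proof
    fix k
    from Jadd[OF z z] have "J (\<lambda>k. 0) = (\<lambda>k. J (\<lambda>k. 0) k + J (\<lambda>k. 0) k)" by simp
    from fun_cong[OF this, of k] show "J (\<lambda>k. 0) k = 0" by simp
  qed
  have Jsum: "J (\<lambda>k. \<Sum>i<N. y i k) = (\<lambda>k. \<Sum>i<N. J (y i) k)" if "\<And>i. i < N \<Longrightarrow> y i \<in> lpS q" for N :: nat and y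
    using that
  proof (induction N)
    case 0 then show ?case using J0 by simp
  next
    case (Suc N)
    have s: "(\<lambda>k. \<Sum>i<N. y i k) \<in> lpS q" using lpS_sum[OF q0(2)] Suc.prems by auto
    have "J (\<lambda>k. \<Sum>i<Suc N. y i k) = J (\<lambda>k. (\<Sum>i<N. y i k) + y N k)" by simp
    also have "\<dots> = (\<lambda>k. J (\<lambda>k. \<Sum>i<N. y i k) k + J (y N) k)"
      using Jadd[OF s Suc.prems[of N]] by simp
    finally show ?case using Suc by simp
  qed
  have QJ0: "0 \<le> Qn p (J x)" if "x \<in> lpS q" for x using Qn_nonneg Jin that by blast
  have QQ0: "0 \<le> Qn q x" if "x \<in> lpS q" for x using Qn_nonneg that by blast
  have M0: "0 \<le> M"
  proof -
    have "0 \<le> Qn p (J (ee 0)) powr (1/p)" by simp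
    also have "\<dots> \<le> M" using up[OF ee_in[of 0]] by (simp add: Qee)
    finally show ?thesis .
  qed
  have C0: "0 < C"
  proof (rule ccontr)
    assume "\<not> 0 < C"
    then have "C * Qn p (J (ee 0)) powr (1/p) \<le> 0" by (simp add: mult_nonpos_nonneg)
    then show False using lo[OF ee_in[of 0]] by (simp add: Qee)
  qed
  have up': "Qn p (J x) \<le> M powr p * Qn q x powr (p/q)" if x: "x \<in> lpS q" for x
  proof -
    have "Qn p (J x) = (Qn p (J x) powr (1/p)) powr p"
      using p0 QJ0[OF x] by (simp add: powr_powr)
    also have "\<dots> \<le> (M * Qn q x powr (1/q)) powr p"
      by (rule powr_mono2) (use p0 up[OF x] in auto)
    also have "\<dots> = M powr p * Qn q x powr (p/q)"
      using M0 by (simp add: powr_mult powr_powr)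
    finally show ?thesis .
  qed
  have lo': "Qn q x powr (p/q) \<le> C powr p * Qn p (J x)" if x: "x \<in> lpS q" for x
  proof -
    have "Qn q x powr (p/q) = (Qn q x powr (1/q)) powr p" by (simp add: powr_powr)
    also have "\<dots> \<le> (C * Qn p (J x) powr (1/p)) powr p"
      by (rule powr_mono2) (use p0 lo[OF x] in auto)
    also have "\<dots> = C powr p * Qn p (J x)"
      using C0 p0 QJ0[OF x] by (simp add: powr_mult powr_powr)
    finally show ?thesis .
  qed
  define u where "u n = J (ee n)" for n
  have ubd: "cmod (u n k) \<le> M" for n k
  proof (rule ccontr)
    assume "\<not> cmod (u n k) \<le> M"
    then have "M powr p < cmod (u n k) powr p" using M0 p0 by (intro powr_less_mono2) auto
    moreover have "cmod (u n k) powr p \<le> Qn p (u n)"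
      using sum_le_suminf[of "\<lambda>k. cmod (u n k) powr p" "{k}"] Jin[OF ee_in[of n]]
      by (simp add: Qn_def lpS_def u_def)
    moreover have "Qn p (u n) \<le> M powr p" using up'[OF ee_in[of n]] by (simp add: Qee u_def)
    ultimately show False by simp
  qed
  obtain \<sigma> where \<sigma>: "strict_mono \<sigma>" and conv: "\<And>k. convergent (\<lambda>n. u (\<sigma> n) k)"
    using coord_subseq[of u M] ubd by blast
  define v where "v j = J (dd (\<sigma> (2*j)) (\<sigma> (2*j+1)))" for j
  have v_eq: "v j = (\<lambda>k. u (\<sigma> (2*j)) k + - u (\<sigma> (2*j+1)) k)" for j
    unfolding v_def dd_def u_def using Jadd[OF ee_in lpS_neg[OF ee_in]] Jneg[OF ee_in] by simp
  have vin: "v j \<in> lpS p" for j using Jin[OF dd_in] by (simp add: v_def)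
  have null: "(\<lambda>j. v j k) \<longlonglongrightarrow> 0" for k
  proof -
    from conv[of k] obtain L where L: "(\<lambda>n. u (\<sigma> n) k) \<longlonglongrightarrow> L" by (auto simp: convergent_def)
    have m1: "strict_mono (\<lambda>j::nat. 2*j)" and m2: "strict_mono (\<lambda>j::nat. 2*j+1)"
      by (auto simp: strict_mono_def)
    have "(\<lambda>j. u (\<sigma> (2*j)) k) \<longlonglongrightarrow> L"
      using LIMSEQ_subseq_LIMSEQ[OF L m1] by (simp add: o_def)
    moreover have "(\<lambda>j. u (\<sigma> (2*j+1)) k) \<longlonglongrightarrow> L"
      using LIMSEQ_subseq_LIMSEQ[OF L m2] by (simp add: o_def)
    ultimately have "(\<lambda>j. u (\<sigma> (2*j)) k - u (\<sigma> (2*j+1)) k) \<longlonglongrightarrow> L - L"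
      by (rule tendsto_diff)
    then show ?thesis by (simp add: v_eq)
  qed
  have sne: "\<sigma> (2*j) \<noteq> \<sigma> (2*j+1)" for j using strict_mono_eq[OF \<sigma>] by simp
  define s where "s = p / q"
  have s0: "0 \<le> s" using p0 q0 by (simp add: s_def)
  define B where "B = M powr p * 2 powr s"
  define c where "c = 2 powr s / C powr p"
  have Cp: "0 < C powr p" using C0 by simp
  have c0: "0 < c" using Cp by (simp add: c_def)
  have hi: "Qn p (v j) \<le> B" for j
    using up'[OF dd_in[of "\<sigma> (2*j)" "\<sigma> (2*j+1)"]] Qdd[OF sne[of j]] by (simp add: v_def B_def s_def)
  have lo2: "c \<le> Qn p (v j)" for j
  proof -
    have "2 powr s \<le> C powr p * Qn p (v j)"
      using lo'[OF dd_in[of "\<sigma> (2*j)" "\<sigma> (2*j+1)"]] Qdd[OF sne[of j]] by (simp add: v_def s_def)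
    then show ?thesis using Cp by (simp add: c_def divide_le_eq mult.commute)
  qed
  obtain m where m: "strict_mono m" and mb: "\<And>N. real N * c / (4 * 2 powr p) \<le> Qn p (\<lambda>k. \<Sum>i<N. v (m i) k)
            \<and> Qn p (\<lambda>k. \<Sum>i<N. v (m i) k) \<le> 2 powr p * (real N * (B + c))"
    using hump[OF p vin null lo2 hi c0] by blast
  define D where "D i = dd (\<sigma> (2 * m i)) (\<sigma> (2 * m i + 1))" for i
  have D_in: "D i \<in> lpS q" for i by (simp add: D_def dd_in)
  have Dsupp: "D i k \<noteq> 0 \<Longrightarrow> k = \<sigma> (2 * m i) \<or> k = \<sigma> (2 * m i + 1)" for i k
    by (auto simp: D_def dd_def ee_def split: if_splits)
  have Ddj: "D i k = 0 \<or> D j k = 0" if "i \<noteq> j" for i j k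
  proof (rule ccontr)
    assume "\<not> (D i k = 0 \<or> D j k = 0)"
    then obtain r r' where "r \<le> 1" "r' \<le> 1" "k = \<sigma> (2 * m i + r)" "k = \<sigma> (2 * m j + r')"
      using Dsupp[of i k] Dsupp[of j k] by (metis add_0_right le_refl zero_le_one)
    then have "2 * m i + r = 2 * m j + r'" using strict_mono_eq[OF \<sigma>] by metis
    then have "m i = m j" using \<open>r \<le> 1\<close> \<open>r' \<le> 1\<close> by arith
    then show False using strict_mono_eq[OF m] that by simp
  qed
  have main: "real N * c / (4 * 2 powr p) \<le> M powr p * (2 powr s * real N powr s)
       \<and> 2 powr s * real N powr s \<le> C powr p * (2 powr p * (real N * (B + c)))" for N
  proof -
    define X where "X = (\<lambda>k. \<Sum>i<N. D i k)"
    have X_in: "X \<in> lpS q" using lpS_sum[OF q0(2) D_in] by (simp add: X_def)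
    have JX: "J X = (\<lambda>k. \<Sum>i<N. v (m i) k)"
      using Jsum[of N D] D_in by (simp add: X_def D_def v_def)
    have QX: "Qn q X = 2 * real N"
      using Qn_sum_disj[of N D q] D_in q0 Ddj Qdd[OF sne] by (simp add: X_def D_def)
    have pw: "(2 * real N) powr s = 2 powr s * real N powr s" by (simp add: powr_mult)
    have a: "Qn p (J X) \<le> M powr p * (2 powr s * real N powr s)"
      using up'[OF X_in] QX pw by (simp add: s_def)
    have b: "2 powr s * real N powr s \<le> C powr p * Qn p (J X)"
      using lo'[OF X_in] QX pw by (simp add: s_def)
    have "C powr p * Qn p (J X) \<le> C powr p * (2 powr p * (real N * (B + c)))"
      using mb[of N] JX Cp by (intro mult_left_mono) auto
    then show ?thesis using a b mb[of N] JX by auto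
  qed
  show False
  proof (cases "p < q")
    case True
    then have s1: "s < 1" using q0 by (simp add: s_def)
    define K where "K = M powr p * 2 powr s * (4 * 2 powr p) / c"
    obtain N :: nat where N: "1 \<le> N" "K * real N powr s < real N powr 1"
      using growth[OF s1 s0] by blast
    have "K * real N powr s * (c / (4 * 2 powr p)) < real N * (c / (4 * 2 powr p))"
      using N c0 by (intro mult_strict_right_mono) auto
    moreover have "K * real N powr s * (c / (4 * 2 powr p)) = M powr p * (2 powr s * real N powr s)"
      using c0 by (simp add: K_def field_simps)
    ultimately show False using main[of N] by simp
  next
    case False
    then have s1: "1 < s" using q0 pq by (simp add: s_def)
    define K where "K = C powr p * 2 powr p * (B + c) / 2 powr s"
    obtain N :: nat where N: "1 \<le> N" "K * real N powr 1 < real N powr s"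
      using growth[OF s1] by auto
    have "K * real N * 2 powr s < real N powr s * 2 powr s"
      using N by (intro mult_strict_right_mono) auto
    moreover have "K * real N * 2 powr s = C powr p * (2 powr p * (real N * (B + c)))"
      by (simp add: K_def field_simps)
    ultimately show False using main[of N] by (simp add: mult.commute)
  qed
qed

lemma core2:
  fixes J :: "(nat \<Rightarrow> complex) \<Rightarrow> (nat \<Rightarrow> complex)" and p q M C :: real
  assumes p: "1 \<le> p" and q: "1 \<le> q" and pq: "p \<noteq> q"
    and Jin: "\<And>x. x \<in> lpS q \<Longrightarrow> J x \<in> lpS p"
    and Jadd: "\<And>x y. x \<in> lpS q \<Longrightarrow> y \<in> lpS q \<Longrightarrow> J (\<lambda>k. x k + y k) = (\<lambda>k. J x k + J y k)"
    and up: "\<And>x. x \<in> lpS q \<Longrightarrow> Qn p (J x) powr (1/p) \<le> M * Qn q x powr (1/q)"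
    and lo: "\<And>x. x \<in> lpS q \<Longrightarrow> Qn q x powr (1/q) \<le> C * Qn p (J x) powr (1/p)"
  shows False
proof -
  have z: "(\<lambda>k. 0::complex) \<in> lpS q" by (simp add: lpS_def)
  have J0: "J (\<lambda>k. 0) k = 0" for k
  proof -
    from Jadd[OF z z] have "J (\<lambda>k. 0) = (\<lambda>k. J (\<lambda>k. 0) k + J (\<lambda>k. 0) k)" by simp
    from fun_cong[OF this, of k] show "J (\<lambda>k. 0) k = 0" by simp
  qed
  have Jneg: "J (\<lambda>k. - x k) = (\<lambda>k. - J x k)" if x: "x \<in> lpS q" for x
  proof
    fix k
    have "J (\<lambda>k. - x k + x k) = (\<lambda>k. J (\<lambda>k. - x k) k + J x k)" by (rule Jadd[OF lpS_neg[OF x] x])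
    from fun_cong[OF this, of k] J0[of k] show "J (\<lambda>k. - x k) k = - J x k"
      by (simp add: eq_neg_iff_add_eq_0)
  qed
  show False by (rule core[OF p q pq Jin Jadd Jneg up lo])
qed

lemma embed_contra:
  fixes sc :: "complex \<Rightarrow> 'y::ab_group_add \<Rightarrow> 'y"
  assumes p: "1 \<le> p" and q: "1 \<le> q" and pq: "p \<noteq> q"
    and cb: "complex_banach sc nm"
    and E: "inv_bop (dsum (lp_space q) (type_space sc nm)) (lp_space p) E"
  shows False
proof -
  let ?A = "dsum (lp_space q) (type_space sc nm)"
  let ?B = "lp_space p"
  have bE: "bop ?A ?B E" and "\<exists>g. bop ?B ?A g \<and> (\<forall>x\<in>carrier ?A. g (E x) = x)"
    using E unfolding inv_bop_def by blast+
  then obtain g where bg: "bop ?B ?A g" and gE: "\<And>x. x \<in> carrier ?A \<Longrightarrow> g (E x) = x" by blast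
  obtain C1 where C1: "\<And>x. x \<in> carrier ?A \<Longrightarrow> vnorm ?B (E x) \<le> C1 * vnorm ?A x"
    using bE unfolding bop_def by blast
  obtain C2 where C2: "\<And>x. x \<in> carrier ?B \<Longrightarrow> vnorm ?A (g x) \<le> C2 * vnorm ?B x"
    using bg unfolding bop_def by blast
  have Ein: "\<And>x. x \<in> carrier ?A \<Longrightarrow> E x \<in> carrier ?B" using bE unfolding bop_def by blast
  have Eadd: "\<And>x y. x \<in> carrier ?A \<Longrightarrow> y \<in> carrier ?A \<Longrightarrow> E (vadd ?A x y) = vadd ?B (E x) (E y)"
    using bE unfolding bop_def by blast
  have nm0: "nm 0 = 0" using cb unfolding complex_banach_def by blast
  have carA: "carrier ?A = lpS q \<times> UNIV"
    by (simp add: dsum_def type_space_def lp_space_def lpS_def)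
  have carB: "carrier ?B = lpS p" by (simp add: lp_space_def lpS_def)
  have nB: "vnorm ?B x = Qn p x powr (1/p)" for x by (simp add: lp_space_def Qn_def)
  have nA: "vnorm ?A (y, 0) = Qn q y powr (1/q)" for y
    by (simp add: dsum_def type_space_def lp_space_def Qn_def nm0)
  have addA: "vadd ?A (x, 0) (y, 0) = ((\<lambda>k. x k + y k), 0)" for x y
    by (simp add: dsum_def type_space_def lp_space_def)
  have addB: "vadd ?B x y = (\<lambda>k. x k + y k)" for x y
    by (simp add: lp_space_def)
  define J where "J y = E (y, 0)" for y
  show False
  proof (rule core2[OF p q pq])
    show "J x \<in> lpS p" if "x \<in> lpS q" for x
      using Ein[of "(x, 0)"] that carA carB by (simp add: J_def)
    show "J (\<lambda>k. x k + y k) = (\<lambda>k. J x k + J y k)" if "x \<in> lpS q" "y \<in> lpS q" for x y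
      using Eadd[of "(x, 0)" "(y, 0)"] that carA addA addB by (simp add: J_def)
    show "Qn p (J x) powr (1/p) \<le> C1 * Qn q x powr (1/q)" if "x \<in> lpS q" for x
      using C1[of "(x, 0)"] that carA nA nB by (simp add: J_def)
    show "Qn q x powr (1/q) \<le> C2 * Qn p (J x) powr (1/p)" if "x \<in> lpS q" for x
    proof -
      have xa: "(x, 0) \<in> carrier ?A" using that carA by simp
      have "vnorm ?A (g (E (x, 0))) \<le> C2 * vnorm ?B (E (x, 0))"
        using C2 Ein[OF xa] by blast
      then show ?thesis using gE[OF xa] nA nB by (simp add: J_def)
    qed
  qed
qed


theorem proposition4p3:
  fixes p q :: real
    and T S :: "(nat \<Rightarrow> complex) \<Rightarrow> (nat \<Rightarrow> complex)"
  assumes "1 \<le> p" and "1 \<le> q" and "p \<noteq> q"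
    and "bop (lp_space p) (lp_space p) T"
    and "bop (lp_space q) (lp_space q) S"
  shows "(\<not> (\<exists>(scY :: complex \<Rightarrow> 'y::ab_group_add \<Rightarrow> 'y) nmY E F.
             complex_banach scY nmY \<and>
             inv_bop (dsum (lp_space q) (type_space scY nmY)) (lp_space p) E \<and>
             inv_bop (lp_space p) (dsum (lp_space q) (type_space scY nmY)) F \<and>
             (\<forall>x\<in>carrier (lp_space p). T x = E ((\<lambda>(y, y'). (S y, y')) (F x)))) \<and>
         \<not> (\<exists>(scX :: complex \<Rightarrow> 'x::ab_group_add \<Rightarrow> 'x) nmX E F.
             complex_banach scX nmX \<and>
             inv_bop (lp_space q) (dsum (lp_space p) (type_space scX nmX)) E \<and>
             inv_bop (dsum (lp_space p) (type_space scX nmX)) (lp_space q) F \<and>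
             (\<forall>x\<in>carrier (lp_space p). \<forall>x'. (T x, x') = E (S (F (x, x'))))))"
proof
  show "\<not> (\<exists>(scY :: complex \<Rightarrow> 'y::ab_group_add \<Rightarrow> 'y) nmY E F.
             complex_banach scY nmY \<and>
             inv_bop (dsum (lp_space q) (type_space scY nmY)) (lp_space p) E \<and>
             inv_bop (lp_space p) (dsum (lp_space q) (type_space scY nmY)) F \<and>
             (\<forall>x\<in>carrier (lp_space p). T x = E ((\<lambda>(y, y'). (S y, y')) (F x))))"
    using embed_contra[of p q] assms by blast
  show "\<not> (\<exists>(scX :: complex \<Rightarrow> 'x::ab_group_add \<Rightarrow> 'x) nmX E F.
             complex_banach scX nmX \<and>
             inv_bop (lp_space q) (dsum (lp_space p) (type_space scX nmX)) E \<and>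
             inv_bop (dsum (lp_space p) (type_space scX nmX)) (lp_space q) F \<and>
             (\<forall>x\<in>carrier (lp_space p). \<forall>x'. (T x, x') = E (S (F (x, x')))))"
    using embed_contra[of q p] assms by metis
qed


end
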